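(* Let $\mathcal{H}$ be a real or complex Hilbert space and let $A$ be a finite-rank positive operator on $\mathcal{H}$ whose trace is an integer $k$. If $k\ge\operatorname{rank}(A)$, then $A$ is the sum of $k$ self-adjoint projections of rank one, i.e. there are unit vectors $x_1,\ldots,x_k\in\mathcal{H}$ with $A=\sum_{i=1}^k x_i\otimes x_i$.
   Context: For $x,y\in\mathcal{H}$, $x\otimes y$ denotes the rank-one operator $u\mapsto\langle u,y\rangle x$; if $\|x\|=1$, $x\otimes x$ is a rank-one orthogonal projection. *)

theory Defs
  imports "HOL-Analysis.Analysis"
begin

text \<open>A Hilbert space over a scalar field 'k (here 'k = real with cj = id, or
  'k = complex with cj = cnj), given by a vector-space scalar multiplication
  smul and an inner product ip, linear in the first and conjugate-linear in the
  second argument.\<close>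

definition ipnorm :: "('a \<Rightarrow> 'a \<Rightarrow> 'k::real_normed_field) \<Rightarrow> 'a \<Rightarrow> real" where
  "ipnorm ip x = sqrt (norm (ip x x))"

definition hilbert_space ::
  "('k::real_normed_field \<Rightarrow> 'k) \<Rightarrow> ('k \<Rightarrow> 'a::ab_group_add \<Rightarrow> 'a) \<Rightarrow> ('a \<Rightarrow> 'a \<Rightarrow> 'k) \<Rightarrow> bool" where
  "hilbert_space cj smul ip \<longleftrightarrow>
     Vector_Spaces.vector_space smul \<and>
     (\<forall>x y z. ip (x + y) z = ip x z + ip y z) \<and>
     (\<forall>c x y. ip (smul c x) y = c * ip x y) \<and>
     (\<forall>x y. ip y x = cj (ip x y)) \<and>
     (\<forall>x. \<exists>r\<ge>0. ip x x = of_real r) \<and>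
     (\<forall>x. ip x x = 0 \<longrightarrow> x = 0) \<and>
     (\<forall>f::nat \<Rightarrow> 'a.
        (\<forall>e>0. \<exists>N. \<forall>m\<ge>N. \<forall>n\<ge>N. ipnorm ip (f m - f n) < e) \<longrightarrow>
        (\<exists>l. \<forall>e>0. \<exists>N. \<forall>n\<ge>N. ipnorm ip (f n - l) < e))"

definition bounded_operator ::
  "('k::real_normed_field \<Rightarrow> 'a::ab_group_add \<Rightarrow> 'a) \<Rightarrow> ('a \<Rightarrow> 'a \<Rightarrow> 'k) \<Rightarrow> ('a \<Rightarrow> 'a) \<Rightarrow> bool" where
  "bounded_operator smul ip A \<longleftrightarrow>
     Vector_Spaces.linear smul smul A \<and> (\<exists>K. \<forall>x. ipnorm ip (A x) \<le> K * ipnorm ip x)"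

definition positive_operator ::
  "('k::real_normed_field \<Rightarrow> 'a::ab_group_add \<Rightarrow> 'a) \<Rightarrow> ('a \<Rightarrow> 'a \<Rightarrow> 'k) \<Rightarrow> ('a \<Rightarrow> 'a) \<Rightarrow> bool" where
  "positive_operator smul ip A \<longleftrightarrow>
     bounded_operator smul ip A \<and>
     (\<forall>x y. ip (A x) y = ip x (A y)) \<and>
     (\<forall>x. \<exists>r\<ge>0. ip (A x) x = of_real r)"

definition finite_rank ::
  "('k::field \<Rightarrow> 'a::ab_group_add \<Rightarrow> 'a) \<Rightarrow> ('a \<Rightarrow> 'a) \<Rightarrow> bool" where
  "finite_rank smul A \<longleftrightarrow> (\<exists>B. finite B \<and> range A \<subseteq> module.span smul B)"

definition op_rank ::
  "('k::field \<Rightarrow> 'a::ab_group_add \<Rightarrow> 'a) \<Rightarrow> ('a \<Rightarrow> 'a) \<Rightarrow> nat" where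
  "op_rank smul A = Vector_Spaces.vector_space.dim smul (range A)"

definition orthonormal_set :: "('a \<Rightarrow> 'a \<Rightarrow> 'k::real_normed_field) \<Rightarrow> 'a set \<Rightarrow> bool" where
  "orthonormal_set ip B \<longleftrightarrow>
     (\<forall>e\<in>B. ip e e = 1) \<and> (\<forall>e\<in>B. \<forall>f\<in>B. e \<noteq> f \<longrightarrow> ip e f = 0)"

text \<open>Trace of a finite-rank operator: sum of the diagonal entries with respect to
  an orthonormal basis of its range (the diagonal entries w.r.t. vectors orthogonal
  to the range vanish for self-adjoint operators).\<close>
definition fr_trace ::
  "('k::real_normed_field \<Rightarrow> 'a::ab_group_add \<Rightarrow> 'a) \<Rightarrow> ('a \<Rightarrow> 'a \<Rightarrow> 'k) \<Rightarrow> ('a \<Rightarrow> 'a) \<Rightarrow> 'k" where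
  "fr_trace smul ip A =
     (\<Sum>e\<in>(SOME B. finite B \<and> orthonormal_set ip B \<and> module.span smul B = range A). ip (A e) e)"

definition rank_one ::
  "('k \<Rightarrow> 'a \<Rightarrow> 'a) \<Rightarrow> ('a \<Rightarrow> 'a \<Rightarrow> 'k) \<Rightarrow> 'a \<Rightarrow> 'a \<Rightarrow> 'a \<Rightarrow> 'a" where
  "rank_one smul ip x y = (\<lambda>u. smul (ip u y) x)"

end

theory Submission
  imports Defs
begin

locale hs =
  fixes cj :: "'k::real_normed_field \<Rightarrow> 'k"
    and smul :: "'k \<Rightarrow> 'a::ab_group_add \<Rightarrow> 'a"
    and ip :: "'a \<Rightarrow> 'a \<Rightarrow> 'k"
  assumes H: "hilbert_space cj smul ip"
  and cj_add: "cj (a + b) = cj a + cj b"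
  and cj_mult: "cj (a * b) = cj a * cj b"
  and cj_of_real: "cj (of_real r) = of_real r"
  and cj_cj: "cj (cj a) = a"
  and cj_norm: "a * cj a = of_real ((norm a)^2)"
begin

sublocale vs: vector_space smul using H unfolding hilbert_space_def by blast

lemma ip_add1: "ip (x + y) z = ip x z + ip y z"
  using H[unfolded hilbert_space_def] by (elim conjE) blast
lemma ip_scale1: "ip (smul c x) y = c * ip x y"
  using H[unfolded hilbert_space_def] by (elim conjE) blast
lemma ip_sym: "ip y x = cj (ip x y)"
  using H[unfolded hilbert_space_def] by (elim conjE) blast
lemma ip_pos: "\<exists>r\<ge>0. ip x x = of_real r"
  using H[unfolded hilbert_space_def] by (elim conjE) blast
lemma ip_nd: "ip x x = 0 \<Longrightarrow> x = 0"
  using H[unfolded hilbert_space_def] by (elim conjE) blast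
lemma cj_zero[simp]: "cj 0 = 0" using cj_add[of 0 0] by simp
lemma cj_minus: "cj (- a) = - cj a" using cj_add[of a "-a"] minus_unique[of "cj a" "cj (-a)"] by simp
lemma cj_diff: "cj (a - b) = cj a - cj b" using cj_add[of a "-b"] cj_minus[of b] by simp
lemma cj_one[simp]: "cj 1 = 1" using cj_of_real[of 1] by simp

lemma ip_add2: "ip x (y + z) = ip x y + ip x z"
proof -
  have "ip x (y + z) = cj (ip (y + z) x)" by (rule ip_sym)
  also have "\<dots> = cj (ip y x) + cj (ip z x)" by (simp only: ip_add1 cj_add)
  also have "\<dots> = ip x y + ip x z" by (simp only: ip_sym[of x y, symmetric] ip_sym[of x z, symmetric])
  finally show ?thesis .
qed
lemma ip_scale2: "ip x (smul c y) = cj c * ip x y"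
proof -
  have "ip x (smul c y) = cj (ip (smul c y) x)" by (rule ip_sym)
  also have "\<dots> = cj c * cj (ip y x)" by (simp only: ip_scale1 cj_mult)
  also have "\<dots> = cj c * ip x y" by (simp only: ip_sym[of x y, symmetric])
  finally show ?thesis .
qed
lemma ip_zero1[simp]: "ip 0 y = 0" using ip_scale1[of 0 0 y] by simp
lemma ip_zero2[simp]: "ip x 0 = 0" using ip_scale2[of x 0 0] by simp
lemma ip_minus1: "ip (- x) y = - ip x y" using ip_add1[of x "-x" y] minus_unique[of "ip x y" "ip (-x) y"] by simp
lemma ip_minus2: "ip x (- y) = - ip x y" using ip_add2[of x y "-y"] minus_unique[of "ip x y" "ip x (-y)"] by simp
lemma ip_diff1: "ip (x - y) z = ip x z - ip y z" using ip_add1[of x "-y" z] ip_minus1 by simp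
lemma ip_diff2: "ip x (y - z) = ip x y - ip x z" using ip_add2[of x y "-z"] ip_minus2 by simp
lemma ip_sum1: "ip (sum f I) y = (\<Sum>i\<in>I. ip (f i) y)"
  by (induction I rule: infinite_finite_induct) (auto simp: ip_add1)
lemma ip_sum2: "ip y (sum f I) = (\<Sum>i\<in>I. ip y (f i))"
  by (induction I rule: infinite_finite_induct) (auto simp: ip_add2)
lemma ip_rscale2: "ip x (smul (of_real r) y) = of_real r * ip x y"
  by (simp add: ip_scale2 cj_of_real)

definition nsq :: "'a \<Rightarrow> real" where "nsq x = norm (ip x x)"
lemma ip_self: "ip x x = of_real (nsq x)"
  using ip_pos[of x] unfolding nsq_def by auto
lemma nsq_ge0: "nsq x \<ge> 0" unfolding nsq_def by simp
lemma nsq_zero_iff: "nsq x = 0 \<longleftrightarrow> x = 0"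
  using ip_nd[of x] unfolding nsq_def by auto
lemma cj_ipself: "cj (ip x x) = ip x x" by (simp add: ip_self cj_of_real)
lemma ipnorm_nsq: "ipnorm ip x = sqrt (nsq x)" unfolding ipnorm_def nsq_def by simp


lemma ortho_sum:
  assumes "finite B" "orthonormal_set ip B" "b' \<in> B"
  shows "(\<Sum>b\<in>B. u b * ip b b') = u b'"
proof -
  have "(\<Sum>b\<in>B. u b * ip b b') = u b' * ip b' b' + (\<Sum>b\<in>B - {b'}. u b * ip b b')"
    using assms by (simp add: sum.remove)
  also have "(\<Sum>b\<in>B - {b'}. u b * ip b b') = 0"
    using assms(2,3) unfolding orthonormal_set_def by (intro sum.neutral) auto
  finally show ?thesis using assms(2,3) unfolding orthonormal_set_def by simp
qed

lemma expand:
  assumes "finite B" "orthonormal_set ip B" "x \<in> vs.span B"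
  shows "x = (\<Sum>b\<in>B. smul (ip x b) b)"
proof -
  obtain u where u: "x = (\<Sum>b\<in>B. smul (u b) b)"
    using assms(3) vs.span_finite[OF assms(1)] by auto
  have "ip x b' = u b'" if "b' \<in> B" for b'
    using ortho_sum[OF assms(1,2) that, of u] unfolding u by (simp add: ip_sum1 ip_scale1)
  then show ?thesis using u by (metis (no_types, lifting) sum.cong)
qed

lemma parseval:
  assumes "finite B" "orthonormal_set ip B" "x \<in> vs.span B"
  shows "ip x x = (\<Sum>b\<in>B. ip x b * ip b x)"
proof -
  have "ip x x = ip (\<Sum>b\<in>B. smul (ip x b) b) x"
    using expand[OF assms] by simp
  also have "\<dots> = (\<Sum>b\<in>B. ip x b * ip b x)" by (simp add: ip_sum1 ip_scale1)
  finally show ?thesis .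
qed

lemma span_insert_cong:
  assumes "vs.span S = vs.span T"
  shows "vs.span (insert x S) = vs.span (insert x T)"
  using assms by (simp add: vs.span_insert)

lemma gram_schmidt:
  assumes "finite S"
  shows "\<exists>B. finite B \<and> orthonormal_set ip B \<and> vs.span B = vs.span S"
  using assms
proof (induction S rule: finite_induct)
  case empty
  then show ?case by (intro exI[of _ "{}"]) (auto simp: orthonormal_set_def)
next
  case (insert x S)
  then obtain B where B: "finite B" "orthonormal_set ip B" "vs.span B = vs.span S" by blast
  define y where "y = x - (\<Sum>b\<in>B. smul (ip x b) b)"
  have sB: "(\<Sum>b\<in>B. smul (ip x b) b) \<in> vs.span B"
    by (intro vs.span_sum vs.span_scale vs.span_base)
  have yorth: "ip y b = 0" if "b \<in> B" for b
  proof -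
    have "ip y b = ip x b - (\<Sum>b'\<in>B. ip x b' * ip b' b)"
      unfolding y_def by (simp add: ip_diff1 ip_sum1 ip_scale1)
    also have "\<dots> = 0" using ortho_sum[OF B(1,2) that, of "\<lambda>b'. ip x b'"] by simp
    finally show ?thesis .
  qed
  have e1: "vs.span (insert x S) = vs.span (insert x B)"
    using span_insert_cong[OF B(3)[symmetric]] .
  show ?case
  proof (cases "y = 0")
    case True
    then have "x \<in> vs.span B" using sB unfolding y_def by simp
    then have "vs.span (insert x B) = vs.span B"
      by (simp add: vs.span_eq vs.span_superset vs.span_mono subset_insertI vs.span_base)
      (meson insert_subset subset_iff vs.span_mono vs.span_superset)
    then show ?thesis using B e1 by auto
  next
    case False
    define n where "n = nsq y"
    have npos: "n > 0" using False nsq_ge0[of y] nsq_zero_iff[of y] unfolding n_def by linarith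
    define c where "c = (of_real (1 / sqrt n) :: 'k)"
    define b0 where "b0 = smul c y"
    have b0b0: "ip b0 b0 = 1"
    proof -
      have yy: "ip y y = of_real n" by (simp add: ip_self n_def)
      have "ip b0 b0 = c * (c * ip y y)"
        unfolding b0_def c_def by (simp only: ip_scale1 ip_rscale2)
      also have "\<dots> = c * (c * of_real n)" by (simp only: yy)
      also have "\<dots> = of_real ((1 / sqrt n) * (1 / sqrt n) * n)" unfolding c_def by (simp only: of_real_mult mult.assoc)
      also have "(1 / sqrt n) * (1 / sqrt n) * n = 1" using npos
        by (simp add: field_simps)
      finally show ?thesis by simp
    qed
    have b0b: "ip b0 b = 0" if "b \<in> B" for b
      unfolding b0_def by (simp add: ip_scale1 yorth[OF that])
    have bb0: "ip b b0 = 0" if "b \<in> B" for b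
      using b0b[OF that] ip_sym[of b b0] by simp
    have on: "orthonormal_set ip (insert b0 B)"
      using B(2) b0b0 b0b bb0 unfolding orthonormal_set_def by auto
    have "x = smul (of_real (sqrt n)) b0 + (\<Sum>b\<in>B. smul (ip x b) b)"
    proof -
      have "smul (of_real (sqrt n)) b0 = smul (of_real (sqrt n * (1 / sqrt n))) y"
        unfolding b0_def c_def by (simp add: mult.commute)
      also have "sqrt n * (1 / sqrt n) = 1" using npos by simp
      finally show ?thesis unfolding y_def by simp
    qed
    then have x_in: "x \<in> vs.span (insert b0 B)"
      by (metis vs.span_add vs.span_scale vs.span_base insertI1 sB
          vs.span_mono subset_insertI subsetD)
    have xi: "x \<in> vs.span (insert x B)" by (intro vs.span_base) simp
    have si: "(\<Sum>b\<in>B. smul (ip x b) b) \<in> vs.span (insert x B)"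
      using sB vs.span_mono[of B "insert x B"] by auto
    have b0_in: "b0 \<in> vs.span (insert x B)"
      unfolding b0_def y_def using xi si by (simp add: vs.span_scale vs.span_diff)
    have "vs.span (insert b0 B) = vs.span (insert x B)"
      unfolding vs.span_eq
      using x_in b0_in by (auto intro: vs.span_base)
    then show ?thesis using on B(1) e1 by (intro exI[of _ "insert b0 B"]) auto
  qed
qed


definition sa :: "('a \<Rightarrow> 'a) \<Rightarrow> bool" where "sa A \<longleftrightarrow> (\<forall>x y. ip (A x) y = ip x (A y))"
definition psd :: "('a \<Rightarrow> 'a) \<Rightarrow> bool" where "psd A \<longleftrightarrow> (\<forall>x. \<exists>r\<ge>0. ip (A x) x = of_real r)"

lemma ip_eqI: assumes "\<And>z. ip a z = ip b z" shows "a = b"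
proof -
  have "ip (a - b) (a - b) = 0" using assms[of "a - b"] by (simp add: ip_diff1)
  then show ?thesis using ip_nd[of "a - b"] by simp
qed

lemma sa_add: "sa A \<Longrightarrow> A (x + y) = A x + A y"
  by (rule ip_eqI) (simp add: sa_def ip_add1)
lemma sa_scale: "sa A \<Longrightarrow> A (smul c x) = smul c (A x)"
  by (rule ip_eqI) (simp add: sa_def ip_scale1)
lemma sa_diff: "sa A \<Longrightarrow> A (x - y) = A x - A y"
  by (rule ip_eqI) (simp add: sa_def ip_diff1)
lemma sa_zero: "sa A \<Longrightarrow> A 0 = 0"
  using sa_diff[of A 0 0] by simp

lemma sa_subspace: assumes "sa A" shows "vs.subspace (range A)"
proof -
  have 1: "0 \<in> range A" using sa_zero[OF assms] by (metis rangeI)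
  have 2: "A x + A y \<in> range A" for x y using sa_add[OF assms, of x y] by (metis rangeI)
  have 3: "smul c (A x) \<in> range A" for c x using sa_scale[OF assms, of c x] by (metis rangeI)
  show ?thesis unfolding vs.subspace_def using 1 2 3 by auto
qed

lemma cs0:
  assumes "sa A" "psd A" "ip (A e) e = 0"
  shows "A e = 0"
proof -
  have "ip (A e) z = 0" for z
  proof (rule ccontr)
    assume nz: "ip (A e) z \<noteq> 0"
    define c where "c = ip (A z) e"
    have cz: "ip (A e) z = cj c" unfolding c_def using assms(1) ip_sym[of "A z" e]
      unfolding sa_def by (simp add: cj_cj)
    have cnz: "c \<noteq> 0" using nz cz by auto
    obtain R where R: "ip (A z) z = of_real R" using assms(2) unfolding psd_def by blast
    define m where "m = norm c ^ 2"
    have mpos: "m > 0" using cnz unfolding m_def by simp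
    have ccj: "c * cj c = of_real m" using cj_norm unfolding m_def by simp
    define s where "s = (R + 1) / (2 * m)"
    define w where "w = z - smul (of_real s * c) e"
    have Aw: "A w = A z - smul (of_real s * c) (A e)"
      unfolding w_def using assms(1) by (simp add: sa_diff sa_scale)
    have "ip (A w) w = ip (A z) z - cj (of_real s * c) * ip (A z) e
       - (of_real s * c) * (ip (A e) z - cj (of_real s * c) * ip (A e) e)"
      unfolding Aw by (simp add: w_def ip_diff1 ip_diff2 ip_scale1 ip_scale2) (simp add: algebra_simps)
    also have "\<dots> = of_real R - of_real s * (cj c * c) - of_real s * (c * cj c)"
      using assms(3) cz R by (simp add: cj_mult cj_of_real c_def algebra_simps)
    also have "\<dots> = of_real (R - 2 * s * m)"
      using ccj by (simp add: mult.commute[of "cj c" c] algebra_simps)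
    finally have eq: "ip (A w) w = of_real (R - 2 * s * m)" .
    obtain r where r: "r \<ge> 0" "ip (A w) w = of_real r" using assms(2) unfolding psd_def by blast
    have "(of_real r :: 'k) = of_real (R - 2 * s * m)" using r(2) eq by metis
    then have "r = R - 2 * s * m" by (simp only: of_real_eq_iff)
    moreover have "2 * s * m = R + 1" unfolding s_def using mpos by simp
    ultimately show False using r(1) by simp
  qed
  from this[of "A e"] show ?thesis using ip_nd by simp
qed

lemma exists_e:
  assumes "sa A" "psd A" "A y \<noteq> 0"
  shows "\<exists>e\<in>range A. \<exists>\<alpha>>0. ip (A e) e = of_real \<alpha>"
proof -
  obtain r where r: "r \<ge> 0" "ip (A (A y)) (A y) = of_real r"
    using assms(2) unfolding psd_def by blast
  have "r \<noteq> 0"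
  proof
    assume "r = 0"
    then have "A (A y) = 0" using cs0[OF assms(1,2)] r by simp
    then have "ip (A y) (A y) = 0" using assms(1) unfolding sa_def by (metis ip_zero2)
    then show False using ip_nd assms(3) by simp
  qed
  then show ?thesis using r by (intro bexI[of _ "A y"]) auto
qed




lemma step:
  assumes saA: "sa A" and psdA: "psd A" and ea: "ip (A e) e = of_real \<alpha>" and apos: "\<alpha> > 0"
  defines "v \<equiv> smul (of_real (1 / sqrt \<alpha>)) (A e)"
  defines "A' \<equiv> \<lambda>u. A u - smul (ip u v) v"
  shows "sa A'" "psd A'" "range A' \<subseteq> range A" "\<forall>u. ip (A' u) e = 0" "v \<in> range A"
proof -
  define t where "t u = ip u (A e) / of_real \<alpha>" for u
  have an: "(of_real \<alpha> :: 'k) \<noteq> 0" using apos by simp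
  have h: "(of_real (1 / sqrt \<alpha>) :: 'k) * of_real (1 / sqrt \<alpha>) = 1 / of_real \<alpha>"
  proof -
    have s: "sqrt \<alpha> * sqrt \<alpha> = \<alpha>" using apos by simp
    have "1 / sqrt \<alpha> * (1 / sqrt \<alpha>) = 1 / \<alpha>"
      by (simp only: times_divide_times_eq mult_1_left s)
    then have "(of_real (1 / sqrt \<alpha> * (1 / sqrt \<alpha>)) :: 'k) = of_real (1 / \<alpha>)" by simp
    then show ?thesis by (simp only: of_real_mult of_real_divide of_real_1)
  qed
  have rk: "smul (ip u v) v = smul (t u) (A e)" for u
  proof -
    have "smul (ip u v) v = smul (of_real (1 / sqrt \<alpha>) * ip u (A e) * of_real (1 / sqrt \<alpha>)) (A e)"
      unfolding v_def by (simp only: ip_rscale2 vs.scale_scale)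
    also have "of_real (1 / sqrt \<alpha>) * ip u (A e) * of_real (1 / sqrt \<alpha>) = t u"
      unfolding t_def using h by (simp add: field_simps)
    finally show ?thesis .
  qed
  define w where "w u = u - smul (t u) e" for u
  have Aw: "A' u = A (w u)" for u
    unfolding A'_def w_def rk using saA by (simp add: sa_diff sa_scale)
  have orth: "ip (A (w u)) e = 0" for u
  proof -
    have "ip (A (w u)) e = ip (A u) e - t u * ip (A e) e"
      unfolding w_def using saA by (simp add: sa_diff sa_scale ip_diff1 ip_scale1)
    also have "t u * ip (A e) e = ip u (A e)" unfolding t_def ea using an by simp
    also have "ip (A u) e = ip u (A e)" using saA unfolding sa_def by simp
    finally show ?thesis by simp
  qed
  show "\<forall>u. ip (A' u) e = 0" using orth Aw by simp
  show "range A' \<subseteq> range A" using Aw by auto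
  show "v \<in> range A" unfolding v_def using sa_scale[OF saA] by (metis rangeI)
  show "psd A'"
    unfolding psd_def
  proof
    fix u
    have "ip (A (w u)) (w u) = ip (A (w u)) u - cj (t u) * ip (A (w u)) e"
      by (simp add: w_def ip_diff2 ip_scale2)
    then have "ip (A' u) u = ip (A (w u)) (w u)" using orth Aw by simp
    moreover obtain r where "r \<ge> 0" "ip (A (w u)) (w u) = of_real r"
      using psdA unfolding psd_def by blast
    ultimately show "\<exists>r\<ge>0. ip (A' u) u = of_real r" by auto
  qed
  show "sa A'"
    unfolding sa_def
  proof (intro allI)
    fix x y
    have "ip (A' x) y = ip (A x) y - ip x v * ip v y"
      unfolding A'_def by (simp add: ip_diff1 ip_scale1)
    moreover have "ip x (A' y) = ip x (A y) - cj (ip y v) * ip x v"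
      unfolding A'_def by (simp add: ip_diff2 ip_scale2)
    moreover have "cj (ip y v) = ip v y" using ip_sym[of v y] by simp
    moreover have "ip (A x) y = ip x (A y)" using saA unfolding sa_def by simp
    ultimately show "ip (A' x) y = ip x (A' y)" by (simp add: mult.commute)
  qed
qed

lemma dim_drop:
  assumes S: "finite S" and VS: "V \<subseteq> vs.span S" and V'V: "V' \<subseteq> V" and eV: "e \<in> V"
    and orth: "\<forall>z\<in>V'. ip z e = 0" and enz: "e \<noteq> 0"
  shows "vs.dim V' < vs.dim V"
proof -
  obtain C where C: "C \<subseteq> V'" "vs.independent C" "V' \<subseteq> vs.span C" "card C = vs.dim V'"
    by (rule vs.basis_exists)
  obtain D where D: "D \<subseteq> V" "vs.independent D" "V \<subseteq> vs.span D" "card D = vs.dim V"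
    by (rule vs.basis_exists)
  have fD: "finite D" using vs.independent_span_bound[OF S D(2)] D(1) VS by auto
  have sub: "vs.subspace {z. ip z e = 0}"
    unfolding vs.subspace_def by (simp add: ip_add1 ip_scale1)
  have "vs.span C \<subseteq> {z. ip z e = 0}"
    using C(1) orth by (intro vs.span_minimal sub) auto
  moreover have "ip e e \<noteq> 0" using enz ip_nd by auto
  ultimately have enC: "e \<notin> vs.span C" by auto
  then have eC: "e \<notin> C" using vs.span_superset by auto
  have ind: "vs.independent (insert e C)" using vs.independent_insertI[OF enC C(2)] .
  have "insert e C \<subseteq> vs.span D" using C(1) V'V eV D(3) by auto
  from vs.independent_span_bound[OF fD ind this]
  have "card (insert e C) \<le> card D" "finite C" by auto
  then show ?thesis using C(4) D(4) eC by simp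
qed

lemma dim_zero:
  assumes S: "finite S" and VS: "V \<subseteq> vs.span S" and d: "vs.dim V = 0"
  shows "V \<subseteq> {0}"
proof -
  obtain C where C: "C \<subseteq> V" "vs.independent C" "V \<subseteq> vs.span C" "card C = vs.dim V"
    by (rule vs.basis_exists)
  have "finite C" using vs.independent_span_bound[OF S C(2)] C(1) VS by auto
  then have "C = {}" using C(4) d by simp
  then show ?thesis using C(3) by simp
qed

lemma chol:
  "\<forall>A. sa A \<and> psd A \<and> (\<exists>S. finite S \<and> range A \<subseteq> vs.span S) \<and> vs.dim (range A) \<le> n \<longrightarrow>
     (\<exists>v. (\<forall>i<n. v i \<in> range A) \<and> (\<forall>u. A u = (\<Sum>i<n. smul (ip u (v i)) (v i))))"
proof (induction n)
  case 0
  show ?case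
  proof (intro allI impI)
    fix A :: "'a \<Rightarrow> 'a"
    assume a: "sa A \<and> psd A \<and> (\<exists>S. finite S \<and> range A \<subseteq> vs.span S) \<and> vs.dim (range A) \<le> 0"
    then obtain S where "finite S" "range A \<subseteq> vs.span S" by blast
    then have "range A \<subseteq> {0}" using dim_zero a by auto
    then have "A u = 0" for u by auto
    then show "\<exists>v. (\<forall>i<0. v i \<in> range A) \<and> (\<forall>u. A u = (\<Sum>i<0. smul (ip u (v i)) (v i)))"
      by (intro exI[of _ "\<lambda>_. 0"]) simp
  qed
next
  case (Suc n)
  show ?case
  proof (intro allI impI)
    fix A :: "'a \<Rightarrow> 'a"
    assume a: "sa A \<and> psd A \<and> (\<exists>S. finite S \<and> range A \<subseteq> vs.span S) \<and> vs.dim (range A) \<le> Suc n"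
    then have saA: "sa A" and psdA: "psd A" and dA: "vs.dim (range A) \<le> Suc n" by auto
    from a obtain S where S: "finite S" "range A \<subseteq> vs.span S" by blast
    show "\<exists>v. (\<forall>i<Suc n. v i \<in> range A) \<and> (\<forall>u. A u = (\<Sum>i<Suc n. smul (ip u (v i)) (v i)))"
    proof (cases "\<forall>y. A y = 0")
      case True
      then have "0 \<in> range A" by (metis rangeI)
      then show ?thesis using True by (intro exI[of _ "\<lambda>_. 0"]) simp
    next
      case False
      then obtain y where "A y \<noteq> 0" by blast
      from exists_e[OF saA psdA this] obtain e \<alpha> where
        e: "e \<in> range A" "\<alpha> > 0" "ip (A e) e = of_real \<alpha>" by blast
      define v0 where "v0 = smul (of_real (1 / sqrt \<alpha>)) (A e)"
      define A' where "A' = (\<lambda>u. A u - smul (ip u v0) v0)"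
      note st = step[OF saA psdA e(3) e(2), folded v0_def, folded A'_def]
      have enz: "e \<noteq> 0" using e(2,3) sa_zero[OF saA] by auto
      have "vs.dim (range A') < vs.dim (range A)"
      proof -
        have "\<forall>z. ip (A' z) e = 0" using st(4) by (simp add: A'_def)
        then show ?thesis using dim_drop[OF S(1) S(2) st(3) e(1) _ enz] by auto
      qed
      then have dA': "vs.dim (range A') \<le> n" using dA by simp
      have "\<exists>S. finite S \<and> range A' \<subseteq> vs.span S" using S st(3) by blast
      then obtain v' where v': "\<forall>i<n. v' i \<in> range A'"
          "\<forall>u. A' u = (\<Sum>i<n. smul (ip u (v' i)) (v' i))"
        using Suc.IH st(1,2) dA' by blast
      define v where "v = v'(n := v0)"
      have "\<forall>i<Suc n. v i \<in> range A"
        using v'(1) st(3,5) unfolding v_def by (auto simp: less_Suc_eq)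
      moreover have "A u = (\<Sum>i<Suc n. smul (ip u (v i)) (v i))" for u
      proof -
        have "(\<Sum>i<n. smul (ip u (v i)) (v i)) = (\<Sum>i<n. smul (ip u (v' i)) (v' i))"
          unfolding v_def by (intro sum.cong) auto
        then have "(\<Sum>i<Suc n. smul (ip u (v i)) (v i)) = A' u + smul (ip u v0) v0"
          using v'(2) by (simp add: v_def)
        then show ?thesis unfolding A'_def by simp
      qed
      ultimately show ?thesis by blast
    qed
  qed
qed


lemma lin2:
  "smul p (smul c1 x + smul c2 y) + smul q (smul d1 x + smul d2 y)
   = smul (p * c1 + q * d1) x + smul (p * c2 + q * d2) y"
  by (simp add: vs.scale_right_distrib vs.scale_left_distrib add_ac)

lemma rot_ip:
  "ip (smul (of_real c) x + smul (of_real s) y) (smul (of_real c) x + smul (of_real s) y)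
   = of_real (c^2) * ip x x + of_real (c * s) * (ip x y + ip y x) + of_real (s^2) * ip y y"
  by (simp add: ip_add1 ip_add2 ip_scale1 ip_rscale2 power2_eq_square algebra_simps)

lemma rot_sum:
  assumes cs: "c^2 + s^2 = 1"
  shows "smul (ip u (smul (of_real c) x + smul (of_real s) y)) (smul (of_real c) x + smul (of_real s) y)
       + smul (ip u (smul (of_real (-s)) x + smul (of_real c) y)) (smul (of_real (-s)) x + smul (of_real c) y)
       = smul (ip u x) x + smul (ip u y) y"
proof -
  define C where "C = (of_real c :: 'k)"
  define S where "S = (of_real s :: 'k)"
  have CS: "C * C + S * S = 1"
  proof -
    have "(of_real (c^2 + s^2) :: 'k) = 1" using cs by simp
    then show ?thesis unfolding C_def S_def by (simp add: power2_eq_square)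
  qed
  have "ip u (smul (of_real c) x + smul (of_real s) y) = C * ip u x + S * ip u y"
    unfolding C_def S_def by (simp only: ip_add2 ip_rscale2)
  moreover have "ip u (smul (of_real (-s)) x + smul (of_real c) y) = - S * ip u x + C * ip u y"
    unfolding C_def S_def by (simp only: ip_add2 ip_scale2 of_real_minus cj_minus cj_of_real)
  moreover have "of_real (-s) = - S" unfolding S_def by simp
  ultimately have "?thesis \<longleftrightarrow>
     smul ((C * ip u x + S * ip u y) * C + (- S * ip u x + C * ip u y) * (- S)) x
   + smul ((C * ip u x + S * ip u y) * S + (- S * ip u x + C * ip u y) * C) y
     = smul (ip u x) x + smul (ip u y) y"
    by (simp only: lin2 flip: C_def S_def)
  moreover have "(C * ip u x + S * ip u y) * C + (- S * ip u x + C * ip u y) * (- S) = ip u x * (C * C + S * S)"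
    by (simp add: algebra_simps)
  moreover have "(C * ip u x + S * ip u y) * S + (- S * ip u x + C * ip u y) * C = ip u y * (C * C + S * S)"
    by (simp add: algebra_simps)
  ultimately show ?thesis using CS by simp
qed

lemma rot_nsq:
  assumes cs: "c^2 + s^2 = 1"
  shows "nsq (smul (of_real c) x + smul (of_real s) y) + nsq (smul (of_real (-s)) x + smul (of_real c) y)
       = nsq x + nsq y"
proof -
  have "(of_real (nsq (smul (of_real c) x + smul (of_real s) y) + nsq (smul (of_real (-s)) x + smul (of_real c) y)) :: 'k)
      = of_real (c^2) * ip x x + of_real (c * s) * (ip x y + ip y x) + of_real (s^2) * ip y y
      + (of_real ((-s)^2) * ip x x + of_real ((-s)*c) * (ip x y + ip y x) + of_real (c^2) * ip y y)"
    by (simp only: of_real_add ip_self[symmetric] rot_ip)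
  also have "\<dots> = of_real (c^2 + s^2) * (ip x x + ip y y)"
    by (simp add: algebra_simps)
  also have "\<dots> = of_real (nsq x + nsq y)" using cs by (simp add: ip_self)
  finally show ?thesis by (simp only: of_real_eq_iff)
qed

lemma equalize:
  "finite I \<Longrightarrow> (\<Sum>i\<in>I. nsq (v i)) = real (card I) \<Longrightarrow>
   \<exists>w. (\<forall>i\<in>I. nsq (w i) = 1) \<and>
       (\<forall>u. (\<Sum>i\<in>I. smul (ip u (w i)) (w i)) = (\<Sum>i\<in>I. smul (ip u (v i)) (v i)))"
proof (induction "card I" arbitrary: I v rule: less_induct)
  case less
  note fin = less.prems(1) and sm = less.prems(2)
  show ?case
  proof (cases "\<forall>i\<in>I. nsq (v i) = 1")
    case True
    then show ?thesis by blast
  next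
    case False
    then obtain i0 where i0: "i0 \<in> I" "nsq (v i0) \<noteq> 1" by blast
    have "\<exists>i\<in>I. nsq (v i) > 1"
    proof (rule ccontr)
      assume "\<not> (\<exists>i\<in>I. nsq (v i) > 1)"
      then have le: "\<forall>i\<in>I. nsq (v i) \<le> 1" by auto
      have "(\<Sum>i\<in>I. nsq (v i)) < (\<Sum>i\<in>I. 1)"
        using le i0 by (intro sum_strict_mono_ex1 fin) (auto intro!: bexI[of _ i0] simp: order.order_iff_strict)
      then show False using sm by simp
    qed
    then obtain i where i: "i \<in> I" "nsq (v i) > 1" by blast
    have "\<exists>j\<in>I. nsq (v j) < 1"
    proof (rule ccontr)
      assume "\<not> (\<exists>j\<in>I. nsq (v j) < 1)"
      then have le: "\<forall>i\<in>I. 1 \<le> nsq (v i)" by auto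
      have "(\<Sum>i\<in>I. 1) < (\<Sum>i\<in>I. nsq (v i))"
        using le i0 by (intro sum_strict_mono_ex1 fin) (auto intro!: bexI[of _ i0] simp: order.order_iff_strict)
      then show False using sm by simp
    qed
    then obtain j where j: "j \<in> I" "nsq (v j) < 1" by blast
    have ij: "i \<noteq> j" using i j by auto
    define P where "P = ip (v i) (v i)"
    define Q where "Q = ip (v j) (v j)"
    define X where "X = ip (v i) (v j) + ip (v j) (v i)"
    define f where "f t = nsq (smul (of_real (cos t)) (v i) + smul (of_real (sin t)) (v j))" for t
    have f_eq: "f t = norm (of_real ((cos t)^2) * P + of_real (cos t * sin t) * X + of_real ((sin t)^2) * Q)" for t
      unfolding f_def nsq_def P_def Q_def X_def by (simp only: rot_ip)
    have cont: "\<forall>t. 0 \<le> t \<and> t \<le> pi / 2 \<longrightarrow> isCont f t"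
      unfolding f_eq[abs_def] by (intro allI impI continuous_intros)
    have f0: "f 0 = nsq (v i)" unfolding f_def by simp
    have f1: "f (pi / 2) = nsq (v j)" unfolding f_def by simp
    obtain t where t: "f t = 1"
      using IVT2[of f "pi / 2" 1 0, OF _ _ _ cont] f0 f1 i(2) j(2) by auto
    define c where "c = cos t"
    define s where "s = sin t"
    have cs: "c^2 + s^2 = 1" unfolding c_def s_def by (simp add: sin_cos_squared_add3 add.commute)
    define wi where "wi = smul (of_real c) (v i) + smul (of_real s) (v j)"
    define wj where "wj = smul (of_real (-s)) (v i) + smul (of_real c) (v j)"
    have nwi: "nsq wi = 1" using t unfolding f_def wi_def c_def s_def .
    have nsum: "nsq wi + nsq wj = nsq (v i) + nsq (v j)"
      unfolding wi_def wj_def by (rule rot_nsq[OF cs])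
    have fsum: "smul (ip u wi) wi + smul (ip u wj) wj = smul (ip u (v i)) (v i) + smul (ip u (v j)) (v j)" for u
      unfolding wi_def wj_def by (rule rot_sum[OF cs])
    define v' where "v' = v(j := wj)"
    define I' where "I' = I - {i}"
    have fI': "finite I'" using fin unfolding I'_def by simp
    have jI': "j \<in> I'" using j ij unfolding I'_def by simp
    have cardI': "card I' = card I - 1" using i fin unfolding I'_def by simp
    have cpos: "card I \<ge> 1" using i fin by (metis card_0_eq empty_iff less_one not_le)
    have g1: "(\<Sum>k\<in>I. g k) = g i + g j + (\<Sum>k\<in>I' - {j}. g k)" for g :: "'b \<Rightarrow> 'c::comm_monoid_add"
    proof -
      have "(\<Sum>k\<in>I. g k) = g i + (\<Sum>k\<in>I'. g k)" unfolding I'_def using fin i by (simp add: sum.remove)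
      also have "(\<Sum>k\<in>I'. g k) = g j + (\<Sum>k\<in>I' - {j}. g k)" using fI' jI' by (simp add: sum.remove)
      finally show ?thesis by (simp add: add.assoc)
    qed
    have g2: "(\<Sum>k\<in>I'. g (v' k)) = g wj + (\<Sum>k\<in>I' - {j}. g (v k))" for g :: "'a \<Rightarrow> 'c::comm_monoid_add"
    proof -
      have "(\<Sum>k\<in>I'. g (v' k)) = g (v' j) + (\<Sum>k\<in>I' - {j}. g (v' k))" using fI' jI' by (simp add: sum.remove)
      also have "(\<Sum>k\<in>I' - {j}. g (v' k)) = (\<Sum>k\<in>I' - {j}. g (v k))"
        unfolding v'_def by (intro sum.cong) auto
      finally show ?thesis unfolding v'_def by simp
    qed
    have "(\<Sum>k\<in>I'. nsq (v' k)) = real (card I')"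
    proof -
      have "(\<Sum>k\<in>I'. nsq (v' k)) = nsq wj + (\<Sum>k\<in>I' - {j}. nsq (v k))" by (rule g2)
      also have "\<dots> = (\<Sum>k\<in>I. nsq (v k)) - nsq wi" using g1[of "\<lambda>k. nsq (v k)"] nsum by simp
      also have "\<dots> = real (card I) - 1" using sm nwi by simp
      finally show ?thesis using cardI' cpos by (simp add: of_nat_diff)
    qed
    moreover have "card I' < card I" using cardI' cpos by simp
    ultimately obtain w where w: "\<forall>k\<in>I'. nsq (w k) = 1"
      "\<forall>u. (\<Sum>k\<in>I'. smul (ip u (w k)) (w k)) = (\<Sum>k\<in>I'. smul (ip u (v' k)) (v' k))"
      using less.hyps[OF _ fI'] by blast
    define w' where "w' = w(i := wi)"
    have "\<forall>k\<in>I. nsq (w' k) = 1" using w(1) nwi unfolding w'_def I'_def by auto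
    moreover have "(\<Sum>k\<in>I. smul (ip u (w' k)) (w' k)) = (\<Sum>k\<in>I. smul (ip u (v k)) (v k))" for u
    proof -
      have "(\<Sum>k\<in>I. smul (ip u (w' k)) (w' k)) = smul (ip u wi) wi + (\<Sum>k\<in>I'. smul (ip u (w' k)) (w' k))"
        unfolding I'_def using fin i by (simp add: sum.remove w'_def)
      also have "(\<Sum>k\<in>I'. smul (ip u (w' k)) (w' k)) = (\<Sum>k\<in>I'. smul (ip u (w k)) (w k))"
        unfolding w'_def I'_def by (intro sum.cong) auto
      also have "\<dots> = smul (ip u wj) wj + (\<Sum>k\<in>I' - {j}. smul (ip u (v k)) (v k))"
        using w(2) g2[of "\<lambda>z. smul (ip u z) z"] by simp
      also have "smul (ip u wi) wi + \<dots> = smul (ip u (v i)) (v i) + smul (ip u (v j)) (v j)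
           + (\<Sum>k\<in>I' - {j}. smul (ip u (v k)) (v k))"
        using fsum[of u] by (simp add: add.assoc)
      also have "\<dots> = (\<Sum>k\<in>I. smul (ip u (v k)) (v k))"
        using g1[of "\<lambda>k. smul (ip u (v k)) (v k)"] by simp
      finally show ?thesis .
    qed
    ultimately show ?thesis by blast
  qed
qed

lemma main:
  assumes pos: "positive_operator smul ip A" and fr: "finite_rank smul A"
    and tr: "fr_trace smul ip A = of_nat k" and rk: "op_rank smul A \<le> k"
  shows "\<exists>x. (\<forall>i<k. ipnorm ip (x i) = 1) \<and> (\<forall>u. A u = (\<Sum>i<k. rank_one smul ip (x i) (x i) u))"
proof -
  have saA: "sa A" using pos unfolding positive_operator_def sa_def by blast
  have psdA: "psd A" using pos unfolding positive_operator_def psd_def by blast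
  obtain S where S: "finite S" "range A \<subseteq> vs.span S" using fr unfolding finite_rank_def by blast
  define n where "n = vs.dim (range A)"
  have nk: "n \<le> k" using rk unfolding op_rank_def n_def .
  obtain v where v: "\<forall>i<n. v i \<in> range A" "\<forall>u. A u = (\<Sum>i<n. smul (ip u (v i)) (v i))"
    using chol[rule_format, of A n] saA psdA S unfolding n_def by blast
  obtain C where C: "C \<subseteq> range A" "vs.independent C" "range A \<subseteq> vs.span C"
    by (rule vs.basis_exists)
  have fC: "finite C" using vs.independent_span_bound[OF S(1) C(2)] C(1) S(2) by auto
  have spC: "vs.span C = range A"
    using C(1,3) vs.span_minimal[OF C(1) sa_subspace[OF saA]] by auto
  obtain B where B: "finite B" "orthonormal_set ip B" "vs.span B = vs.span C"
    using gram_schmidt[OF fC] by blast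
  have exB: "\<exists>B. finite B \<and> orthonormal_set ip B \<and> vs.span B = range A"
    using B spC by auto
  define B0 where "B0 = (SOME B. finite B \<and> orthonormal_set ip B \<and> vs.span B = range A)"
  have B0: "finite B0" "orthonormal_set ip B0" "vs.span B0 = range A"
    using someI_ex[OF exB] unfolding B0_def by auto
  have "fr_trace smul ip A = (\<Sum>b\<in>B0. ip (A b) b)"
    unfolding fr_trace_def B0_def by simp
  also have "\<dots> = (\<Sum>b\<in>B0. \<Sum>i<n. ip b (v i) * ip (v i) b)"
    using v(2) by (simp add: ip_sum1 ip_scale1)
  also have "\<dots> = (\<Sum>i<n. \<Sum>b\<in>B0. ip (v i) b * ip b (v i))"
    by (subst sum.swap) (simp add: mult.commute)
  also have "\<dots> = (\<Sum>i<n. ip (v i) (v i))"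
    using parseval[OF B0(1,2)] v(1) B0(3) by simp
  also have "\<dots> = of_real (\<Sum>i<n. nsq (v i))" by (simp add: ip_self)
  finally have "(of_real (\<Sum>i<n. nsq (v i)) :: 'k) = of_real (real k)" using tr by simp
  then have sumk: "(\<Sum>i<n. nsq (v i)) = real k" by (simp only: of_real_eq_iff)
  define v2 where "v2 i = (if i < n then v i else 0)" for i
  have s1: "(\<Sum>i<k. nsq (v2 i)) = (\<Sum>i<n. nsq (v i))"
    by (rule sum.mono_neutral_cong_left[symmetric]) (use nk in \<open>auto simp: v2_def nsq_def\<close>)
  have s2: "(\<Sum>i<k. smul (ip u (v2 i)) (v2 i)) = (\<Sum>i<n. smul (ip u (v i)) (v i))" for u
    by (rule sum.mono_neutral_cong_left[symmetric]) (use nk in \<open>auto simp: v2_def\<close>)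
  obtain w where w: "\<forall>i\<in>{..<k}. nsq (w i) = 1"
    "\<forall>u. (\<Sum>i<k. smul (ip u (w i)) (w i)) = (\<Sum>i<k. smul (ip u (v2 i)) (v2 i))"
    using equalize[of "{..<k}" v2] s1 sumk by auto
  show ?thesis
  proof (intro exI[of _ w] conjI allI impI)
    fix i assume "i < k"
    then show "ipnorm ip (w i) = 1" using w(1) by (simp add: ipnorm_nsq)
  next
    fix u
    show "A u = (\<Sum>i<k. rank_one smul ip (w i) (w i) u)"
      unfolding rank_one_def using w(2) s2 v(2) by simp
  qed
qed

end

theorem proposition6:
  shows
  "(\<forall>(smul :: real \<Rightarrow> 'a::ab_group_add \<Rightarrow> 'a) ip A (k::nat).
      hilbert_space id smul ip \<and> positive_operator smul ip A \<and> finite_rank smul A \<and>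
      fr_trace smul ip A = of_nat k \<and> k \<ge> op_rank smul A \<longrightarrow>
      (\<exists>x :: nat \<Rightarrow> 'a. (\<forall>i<k. ipnorm ip (x i) = 1) \<and>
         (\<forall>u. A u = (\<Sum>i<k. rank_one smul ip (x i) (x i) u)))) \<and>
   (\<forall>(smul :: complex \<Rightarrow> 'b::ab_group_add \<Rightarrow> 'b) ip A (k::nat).
      hilbert_space cnj smul ip \<and> positive_operator smul ip A \<and> finite_rank smul A \<and>
      fr_trace smul ip A = of_nat k \<and> k \<ge> op_rank smul A \<longrightarrow>
      (\<exists>x :: nat \<Rightarrow> 'b. (\<forall>i<k. ipnorm ip (x i) = 1) \<and>
         (\<forall>u. A u = (\<Sum>i<k. rank_one smul ip (x i) (x i) u))))"
proof (intro conjI allI impI)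
  fix smul :: "real \<Rightarrow> 'a \<Rightarrow> 'a" and ip A and k :: nat
  assume a: "hilbert_space id smul ip \<and> positive_operator smul ip A \<and> finite_rank smul A \<and>
      fr_trace smul ip A = of_nat k \<and> k \<ge> op_rank smul A"
  interpret r: hs id smul ip
    by unfold_locales (use a in \<open>auto simp: power2_eq_square\<close>)
  show "\<exists>x :: nat \<Rightarrow> 'a. (\<forall>i<k. ipnorm ip (x i) = 1) \<and>
         (\<forall>u. A u = (\<Sum>i<k. rank_one smul ip (x i) (x i) u))"
    using r.main a by blast
next
  fix smul :: "complex \<Rightarrow> 'b \<Rightarrow> 'b" and ip A and k :: nat
  assume a: "hilbert_space cnj smul ip \<and> positive_operator smul ip A \<and> finite_rank smul A \<and>
      fr_trace smul ip A = of_nat k \<and> k \<ge> op_rank smul A"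
  interpret c: hs cnj smul ip
  proof unfold_locales
    show "hilbert_space cnj smul ip" using a by blast
  next
    fix z :: complex show "z * cnj z = of_real ((norm z)\<^sup>2)" by (rule complex_norm_square[symmetric])
  qed auto
  show "\<exists>x :: nat \<Rightarrow> 'b. (\<forall>i<k. ipnorm ip (x i) = 1) \<and>
         (\<forall>u. A u = (\<Sum>i<k. rank_one smul ip (x i) (x i) u))"
    using c.main a by blast
qed

end
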